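(* The number of zero-normalized $\Gamma_{m,n}$-semimodules $\Delta$ satisfying $\widehat{\Delta}=\Delta$ equals $\binom{\lfloor m/2\rfloor+\lfloor n/2\rfloor}{\lfloor m/2\rfloor}$.
   Context: Let $m,n$ be coprime positive integers and $\Gamma_{m,n}=\{am+bn:a,b\in\mathbb{Z}_{\ge0}\}$. A $\Gamma_{m,n}$-semimodule is $\Delta\subset\mathbb{Z}_{\ge0}$ with $\Delta+\Gamma_{m,n}\subset\Delta$; zero-normalized means $\min\Delta=0$. Its dual is $\Delta^*=\{\varphi\in\mathbb{Z}:\varphi+\Delta\subset\Gamma_{m,n}\}$ and $\widehat\Delta=\Delta^*-\min\Delta^*$ (equivalently $\max(\mathbb{Z}\setminus\Delta)-(\mathbb{Z}\setminus\Delta)$). *)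

theory Defs
  imports Main
begin

definition Gamma :: "nat \<Rightarrow> nat \<Rightarrow> int set" where
  "Gamma m n = {int (a * m + b * n) | a b. True}"

definition is_semimodule :: "nat \<Rightarrow> nat \<Rightarrow> int set \<Rightarrow> bool" where
  "is_semimodule m n D \<longleftrightarrow> D \<subseteq> {0..} \<and> (\<forall>d\<in>D. \<forall>g\<in>Gamma m n. d + g \<in> D)"

definition zero_normalized :: "int set \<Rightarrow> bool" where
  "zero_normalized D \<longleftrightarrow> 0 \<in> D \<and> (\<forall>d\<in>D. 0 \<le> d)"

definition dual :: "nat \<Rightarrow> nat \<Rightarrow> int set \<Rightarrow> int set" where
  "dual m n D = {\<phi>. \<forall>d\<in>D. \<phi> + d \<in> Gamma m n}"

definition hat :: "nat \<Rightarrow> nat \<Rightarrow> int set \<Rightarrow> int set" where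
  "hat m n D = (\<lambda>x. x - Inf (dual m n D)) ` dual m n D"

end

theory Submission
  imports Defs
begin


lemma rep_exists:
  fixes M N x :: int assumes "coprime M N"
  shows "\<exists>i j. x = i*N + j*M"
proof -
  obtain u v where "u*M + v*N = gcd M N" using bezout_int by blast
  with assms have "u*M + v*N = 1" by simp
  hence "x = (x*v)*N + (x*u)*M" by (metis mult.commute mult.left_commute distrib_left mult.right_neutral add.commute)
  thus ?thesis by blast
qed

lemma rep_window:
  fixes M N x L :: int assumes "coprime M N" "M > 0"
  shows "\<exists>i j. L \<le> i \<and> i < L + M \<and> x = i*N + j*M"
proof -
  obtain i j where ij: "x = i*N + j*M" using rep_exists assms by blast
  define t where "t = (i - L) div M"
  define i' where "i' = (i - L) mod M + L"
  have "i = i' + t*M" unfolding t_def i'_def by (metis add.commute add.left_commute diff_add_cancel mod_mult_div_eq mult.commute)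
  moreover have "L \<le> i'" "i' < L + M" unfolding i'_def using assms(2) by auto
  ultimately have "x = i'*N + (j + t*N)*M" "L \<le> i'" "i' < L + M" using ij by (auto simp: algebra_simps)
  thus ?thesis by blast
qed

lemma rep_unique:
  fixes M N :: int assumes "coprime M N" "M > 0"
    and "i*N + j*M = i'*N + j'*M"
  shows "\<exists>t. i' = i + t*M \<and> j' = j - t*N"
proof -
  have "(i' - i)*N = (j - j')*M" using assms(3) by (simp add: algebra_simps)
  hence "M dvd (i' - i)*N" by (metis dvd_triv_right)
  hence "M dvd (i' - i)" using assms(1) by (simp add: coprime_dvd_mult_left_iff)
  then obtain t where t: "i' - i = M * t" by (auto elim: dvdE)
  hence "M*t*N = (j - j')*M" using \<open>(i' - i)*N = _\<close> by simp
  hence "M*(t*N) = M*(j - j')" by (simp add: algebra_simps)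
  hence "t*N = j - j'" using assms(2) by simp
  thus ?thesis using t by (intro exI[of _ t]) (auto simp: algebra_simps)
qed

lemma rep_unique_win:
  fixes M N :: int assumes "coprime M N" "M > 0"
    and "i*N + j*M = i'*N + j'*M" "L \<le> i" "i < L+M" "L \<le> i'" "i' < L+M"
  shows "i = i' \<and> j = j'"
proof -
  obtain t where t: "i' = i + t*M" "j' = j - t*N" using rep_unique assms(1-3) by blast
  have "t = 0"
  proof (rule ccontr)
    assume "t \<noteq> 0"
    hence "\<bar>t*M\<bar> \<ge> M" using assms(2) by (simp add: abs_mult)
    thus False using t assms(4-7) by auto
  qed
  thus ?thesis using t by simp
qed

lemma Gamma_iff: "x \<in> Gamma m n \<longleftrightarrow> (\<exists>a b. 0 \<le> a \<and> 0 \<le> b \<and> x = a * int m + b * int n)"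
  unfolding Gamma_def
  apply auto
  apply (metis of_nat_0_le_iff)
  by (metis nat_0_le of_nat_add of_nat_mult)


lemma int_Inf_in:
  fixes X :: "int set" assumes "X \<noteq> {}" "bdd_below X"
  shows "Inf X \<in> X"
proof (rule ccontr)
  assume nin: "Inf X \<notin> X"
  have "\<And>y. y \<in> X \<Longrightarrow> Inf X + 1 \<le> y"
  proof -
    fix y assume "y \<in> X"
    hence "Inf X \<le> y" using assms(2) by (rule cInf_lower)
    moreover have "Inf X \<noteq> y" using nin \<open>y \<in> X\<close> by auto
    ultimately show "Inf X + 1 \<le> y" by simp
  qed
  hence "Inf X + 1 \<le> Inf X" using assms(1) by (intro cInf_greatest) auto
  thus False by simp
qed

definition GI :: "int \<Rightarrow> int \<Rightarrow> int set" where
  "GI M N = {x. \<exists>a b. 0 \<le> a \<and> 0 \<le> b \<and> x = a*M + b*N}"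

lemma Gamma_GI: "Gamma m n = GI (int m) (int n)"
  by (simp add: set_eq_iff Gamma_iff GI_def)

lemma GI_rep:
  fixes M N :: int
  assumes cop: "coprime M N" and mpos: "0 < M" and npos: "0 < N" and "0 \<le> i" "i < M"
  shows "i*N + j*M \<in> GI M N \<longleftrightarrow> 0 \<le> j"
proof
  assume "0 \<le> j" thus "i*N + j*M \<in> GI M N" using assms unfolding GI_def
    by (intro CollectI exI[of _ j] exI[of _ i]) auto
next
  assume "i*N + j*M \<in> GI M N"
  then obtain a b where ab: "0 \<le> a" "0 \<le> b" "i*N + j*M = a*M + b*N" unfolding GI_def by auto
  have e: "b mod M + (b div M)*M = b" by (rule mod_div_mult_eq)
  have "b*N = (b mod M + (b div M)*M)*N" by (subst e) (rule refl)
  hence "i*N + j*M = (b mod M)*N + (a + (b div M)*N)*M" using ab(3)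
    by (smt (verit) distrib_right mult.assoc mult.commute)
  hence "i = b mod M \<and> j = a + (b div M)*N"
    using rep_unique_win[OF cop mpos, of i j "b mod M" "a + (b div M)*N" 0] mpos assms by auto
  moreover have "0 \<le> b div M" using ab mpos by (simp add: pos_imp_zdiv_nonneg_iff)
  ultimately show "0 \<le> j" using ab npos by simp
qed

lemma GI_sym:
  fixes M N :: int
  assumes cop: "coprime M N" and mpos: "0 < M" and npos: "0 < N"
  shows "x \<in> GI M N \<longleftrightarrow> M*N - M - N - x \<notin> GI M N"
proof -
  obtain i j where ij: "0 \<le> i" "i < M" "x = i*N + j*M" using rep_window[OF cop mpos, of 0 x] by auto
  have "M*N - M - N - x = (M - 1 - i)*N + (-1-j)*M" using ij by (simp add: algebra_simps)
  moreover have "0 \<le> M - 1 - i" "M - 1 - i < M" using ij by auto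
  ultimately have "M*N - M - N - x \<in> GI M N \<longleftrightarrow> 0 \<le> -1-j" using GI_rep[OF cop mpos npos] by simp
  moreover have "x \<in> GI M N \<longleftrightarrow> 0 \<le> j" using GI_rep[OF cop mpos npos] ij by simp
  ultimately show ?thesis by auto
qed

lemma GI_large:
  fixes M N :: int
  assumes cop: "coprime M N" and mpos: "0 < M" and npos: "0 < N" and "x > M*N - M - N"
  shows "x \<in> GI M N"
proof -
  obtain i j where ij: "0 \<le> i" "i < M" "x = i*N + j*M" using rep_window[OF cop mpos, of 0 x] by auto
  have "0 \<le> j"
  proof (rule ccontr)
    assume "\<not> 0 \<le> j" hence "j \<le> -1" by simp
    hence "j*M \<le> -1*M" using mpos by (intro mult_right_mono) auto
    moreover have "i*N \<le> (M-1)*N" using ij npos by (intro mult_right_mono) auto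
    ultimately have "x \<le> M*N - M - N" using ij by (simp add: algebra_simps)
    thus False using assms by simp
  qed
  thus ?thesis using GI_rep[OF cop mpos npos] ij by simp
qed

lemma GI_F_notin:
  fixes M N :: int
  assumes cop: "coprime M N" and mpos: "0 < M" and npos: "0 < N"
  shows "M*N - M - N \<notin> GI M N"
proof -
  have "0 \<in> GI M N" unfolding GI_def by (auto intro!: exI[where x=0])
  thus ?thesis using GI_sym[OF cop mpos npos, of 0] by simp
qed

lemma GI_closed:
  assumes "\<forall>x\<in>D. x + M \<in> D" "\<forall>x\<in>D. x + N \<in> D" "x \<in> D" "g \<in> GI M N"
  shows "x + g \<in> D"
proof -
  obtain a b where ab: "0 \<le> a" "0 \<le> b" "g = a*M + b*N" using assms(4) unfolding GI_def by auto
  have A: "\<And>y. y \<in> D \<Longrightarrow> y + int k * M \<in> D" for k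
  proof (induction k)
    case 0 thus ?case by simp
  next
    case (Suc k)
    have "y + int (Suc k) * M = (y + int k * M) + M" by (simp add: algebra_simps)
    thus ?case using assms(1) Suc by metis
  qed
  have B: "\<And>y. y \<in> D \<Longrightarrow> y + int k * N \<in> D" for k
  proof (induction k)
    case 0 thus ?case by simp
  next
    case (Suc k)
    have "y + int (Suc k) * N = (y + int k * N) + N" by (simp add: algebra_simps)
    thus ?case using assms(2) Suc by metis
  qed
  obtain ka kb where k: "a = int ka" "b = int kb" using ab nonneg_int_cases by metis
  have "x + g = (x + int kb * N) + int ka * M" using ab k by (simp add: algebra_simps)
  thus ?thesis using A[OF B[OF assms(3)]] by (simp add: add.assoc)
qed


definition dualI :: "int \<Rightarrow> int \<Rightarrow> int set \<Rightarrow> int set" where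
  "dualI M N D = {\<phi>. \<forall>d\<in>D. \<phi> + d \<in> GI M N}"

definition antisym_at :: "int \<Rightarrow> int set \<Rightarrow> bool" where
  "antisym_at K D \<longleftrightarrow> (\<forall>x. x \<in> D \<longleftrightarrow> K - x \<notin> D)"

definition semI :: "int \<Rightarrow> int \<Rightarrow> int set \<Rightarrow> bool" where
  "semI M N D \<longleftrightarrow> D \<subseteq> {0..} \<and> (\<forall>d\<in>D. \<forall>g\<in>GI M N. d + g \<in> D)"

lemma dual_dualI: "dual m n D = dualI (int m) (int n) D"
  unfolding dual_def dualI_def Gamma_GI ..

lemma sem_semI: "is_semimodule m n D \<longleftrightarrow> semI (int m) (int n) D"
  unfolding is_semimodule_def semI_def Gamma_GI ..

lemma antisym_odd: assumes "antisym_at K D" shows "odd K"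
proof
  assume "even K"
  then obtain h where "K = 2*h" by auto
  hence "K - h = h" by simp
  thus False using assms unfolding antisym_at_def by metis
qed

lemma antisym_unique:
  assumes "antisym_at K D" "antisym_at K' D" "D \<subseteq> {0..}" "0 \<in> D"
  shows "K = K'"
proof -
  have eq: "\<And>y. y \<in> D \<longleftrightarrow> y + (K' - K) \<in> D"
  proof -
    fix y
    have "y \<in> D \<longleftrightarrow> K - y \<notin> D" using assms(1) unfolding antisym_at_def by metis
    also have "\<dots> \<longleftrightarrow> K' - (K - y) \<in> D" using assms(2) unfolding antisym_at_def by metis
    finally show "y \<in> D \<longleftrightarrow> y + (K' - K) \<in> D" by (simp add: algebra_simps)
  qed
  have "K' - K \<in> D" using eq[of 0] assms(4) by simp
  moreover have "-(K' - K) \<in> D" using eq[of "-(K'-K)"] assms(4) by simp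
  ultimately have "0 \<le> K' - K" "0 \<le> -(K' - K)" using assms(3) by auto
  thus ?thesis by simp
qed

context
  fixes M N :: int
  assumes cop: "coprime M N" and mpos: "0 < M" and npos: "0 < N"
begin

lemma dual_char:
  assumes "semI M N D"
  shows "dualI M N D = {\<phi>. M*N - M - N - \<phi> \<notin> D}"
proof (intro set_eqI iffI)
  fix \<phi> assume "\<phi> \<in> dualI M N D"
  hence "\<forall>d\<in>D. \<phi> + d \<in> GI M N" unfolding dualI_def by simp
  moreover have "\<phi> + (M*N - M - N - \<phi>) \<notin> GI M N" using GI_F_notin[OF cop mpos npos]
    by (metis add_diff_cancel_left' add_diff_eq)
  ultimately show "\<phi> \<in> {\<phi>. M*N - M - N - \<phi> \<notin> D}" by blast
next
  fix \<phi> assume "\<phi> \<in> {\<phi>. M*N - M - N - \<phi> \<notin> D}"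
  hence nd: "M*N - M - N - \<phi> \<notin> D" by simp
  show "\<phi> \<in> dualI M N D" unfolding dualI_def
  proof (intro CollectI ballI)
    fix d assume d: "d \<in> D"
    show "\<phi> + d \<in> GI M N"
    proof (rule ccontr)
      assume "\<phi> + d \<notin> GI M N"
      hence "M*N - M - N - (\<phi> + d) \<in> GI M N" using GI_sym[OF cop mpos npos] by blast
      hence "d + (M*N - M - N - (\<phi> + d)) \<in> D" using assms d unfolding semI_def by blast
      thus False using nd by (simp add: algebra_simps)
    qed
  qed
qed

lemma dual_props:
  assumes "semI M N D" "0 \<in> D"
  shows "dualI M N D \<noteq> {}" "bdd_below (dualI M N D)" "\<And>\<phi>. \<phi> \<in> dualI M N D \<Longrightarrow> 0 \<le> \<phi>"
proof -
  have sub: "D \<subseteq> {0..}" using assms unfolding semI_def by auto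
  have "M*N - M - N + 1 \<in> dualI M N D" using dual_char[OF assms(1)] sub by auto
  thus "dualI M N D \<noteq> {}" by auto
  show lb: "\<And>\<phi>. \<phi> \<in> dualI M N D \<Longrightarrow> 0 \<le> \<phi>"
  proof (rule ccontr)
    fix \<phi> assume "\<phi> \<in> dualI M N D" "\<not> 0 \<le> \<phi>"
    hence "M*N - M - N - \<phi> \<notin> D" "M*N - M - N - \<phi> > M*N - M - N" using dual_char[OF assms(1)] by auto
    moreover have "M*N - M - N - \<phi> \<in> GI M N" using GI_large[OF cop mpos npos] calculation(2) by blast
    ultimately show False using assms unfolding semI_def by force
  qed
  thus "bdd_below (dualI M N D)" by (meson bdd_belowI)
qed

lemma hat_char:
  assumes "semI M N D" "0 \<in> D"
  shows "(\<lambda>x. x - Inf (dualI M N D)) ` dualI M N D = {y. (M*N - M - N - Inf (dualI M N D)) - y \<notin> D}"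
  (is "?L = ?R")
proof (intro set_eqI iffI)
  fix y assume "y \<in> ?L"
  then obtain \<phi> where "\<phi> \<in> dualI M N D" "y = \<phi> - Inf (dualI M N D)" by auto
  thus "y \<in> ?R" using dual_char[OF assms(1)] by (auto simp: algebra_simps)
next
  fix y assume "y \<in> ?R"
  hence "y + Inf (dualI M N D) \<in> dualI M N D" using dual_char[OF assms(1)] by (auto simp: algebra_simps)
  thus "y \<in> ?L" by (intro image_eqI[where x="y + Inf (dualI M N D)"]) auto
qed

lemma Inf_dual_antisym:
  assumes "semI M N D" "0 \<in> D" "antisym_at K D"
  shows "Inf (dualI M N D) = M*N - M - N - K"
proof -
  let ?F = "M*N - M - N"
  have sub: "D \<subseteq> {0..}" using assms unfolding semI_def by auto
  have mem: "\<And>\<phi>. \<phi> \<in> dualI M N D \<longleftrightarrow> K - ?F + \<phi> \<in> D"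
  proof -
    fix \<phi>
    have "\<phi> \<in> dualI M N D \<longleftrightarrow> ?F - \<phi> \<notin> D" using dual_char[OF assms(1)] by auto
    also have "\<dots> \<longleftrightarrow> K - (?F - \<phi>) \<in> D" using assms(3) unfolding antisym_at_def by metis
    finally show "\<phi> \<in> dualI M N D \<longleftrightarrow> K - ?F + \<phi> \<in> D" by (simp add: algebra_simps)
  qed
  have "Inf (dualI M N D) \<in> dualI M N D" using int_Inf_in dual_props[OF assms(1,2)] by blast
  hence "K - ?F + Inf (dualI M N D) \<ge> 0" using mem sub by auto
  moreover have "Inf (dualI M N D) \<le> ?F - K"
    using mem[of "?F - K"] assms(2) dual_props[OF assms(1,2)] by (intro cInf_lower) auto
  ultimately show ?thesis by simp
qed

end


lemma shift_mem: "(x::int) \<in> (\<lambda>y. y + t) ` D \<longleftrightarrow> x - t \<in> D"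
proof
  assume "x \<in> (\<lambda>y. y + t) ` D" then obtain y where "y \<in> D" "x = y + t" by blast
  thus "x - t \<in> D" by simp
next
  assume "x - t \<in> D" thus "x \<in> (\<lambda>y. y + t) ` D" by (rule rev_image_eqI) simp
qed

lemma odd_div2: "odd (a::int) \<Longrightarrow> odd b \<Longrightarrow> 2 * ((a - b) div 2) = a - b"
  by presburger

definition Nset :: "int \<Rightarrow> int \<Rightarrow> int set set" where
  "Nset M N = {D. semI M N D \<and> 0 \<in> D \<and> (\<lambda>x. x - Inf (dualI M N D)) ` dualI M N D = D}"

definition Aset :: "int \<Rightarrow> int \<Rightarrow> int \<Rightarrow> int set set" where
  "Aset M N K0 = {E. (\<forall>x\<in>E. x + M \<in> E) \<and> (\<forall>x\<in>E. x + N \<in> E) \<and> antisym_at K0 E}"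

definition fmap :: "int \<Rightarrow> int \<Rightarrow> int \<Rightarrow> int set \<Rightarrow> int set" where
  "fmap M N K0 D = (\<lambda>x. x + (K0 - (M*N - M - N - Inf (dualI M N D))) div 2) ` D"

context
  fixes M N :: int
  assumes cop: "coprime M N" and mpos: "0 < M" and npos: "0 < N"
begin

lemma M_GI: "M \<in> GI M N" unfolding GI_def by (rule CollectI, rule exI[of _ 1], rule exI[of _ 0]) simp
lemma N_GI: "N \<in> GI M N" unfolding GI_def by (rule CollectI, rule exI[of _ 0], rule exI[of _ 1]) simp

lemma Nset_char:
  "D \<in> Nset M N \<longleftrightarrow> semI M N D \<and> 0 \<in> D \<and> antisym_at (M*N - M - N - Inf (dualI M N D)) D"
proof -
  { assume "semI M N D" "0 \<in> D"
    hence "(\<lambda>x. x - Inf (dualI M N D)) ` dualI M N D = D \<longleftrightarrow> antisym_at (M*N - M - N - Inf (dualI M N D)) D"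
      using hat_char[OF cop mpos npos] unfolding antisym_at_def by auto }
  thus ?thesis unfolding Nset_def by auto
qed

lemma fmap_bij:
  assumes "odd K0"
  shows "bij_betw (fmap M N K0) (Nset M N) (Aset M N K0)"
  unfolding bij_betw_def
proof (intro conjI)
  let ?F = "M*N - M - N"
  let ?t = "\<lambda>D. (K0 - (?F - Inf (dualI M N D))) div 2"
  have fm: "fmap M N K0 D = (\<lambda>x. x + ?t D) ` D" for D unfolding fmap_def ..
  show "inj_on (fmap M N K0) (Nset M N)"
  proof (rule inj_onI)
    fix D D' assume D: "D \<in> Nset M N" and D': "D' \<in> Nset M N" and eq: "fmap M N K0 D = fmap M N K0 D'"
    have mem: "x - ?t D \<in> D \<longleftrightarrow> x - ?t D' \<in> D'" for x
    proof -
      have "x \<in> fmap M N K0 D \<longleftrightarrow> x \<in> fmap M N K0 D'" using eq by simp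
      thus ?thesis by (simp only: fm shift_mem)
    qed
    have z: "0 \<in> D" "0 \<in> D'" "D \<subseteq> {0..}" "D' \<subseteq> {0..}" using D D' unfolding Nset_char semI_def by auto
    have "?t D - ?t D' \<in> D'" using mem[of "?t D"] z by simp
    moreover have "?t D' - ?t D \<in> D" using mem[of "?t D'"] z by simp
    ultimately have "0 \<le> ?t D - ?t D'" "0 \<le> ?t D' - ?t D" using z by auto
    hence teq: "?t D = ?t D'" by simp
    have "x \<in> D \<longleftrightarrow> x \<in> D'" for x using mem[of "x + ?t D"] teq by simp
    thus "D = D'" by auto
  qed
  show "fmap M N K0 ` Nset M N = Aset M N K0"
  proof (intro set_eqI iffI)
    fix E assume "E \<in> fmap M N K0 ` Nset M N"
    then obtain D where D: "D \<in> Nset M N" and E: "E = fmap M N K0 D" by auto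
    have sD: "semI M N D" "0 \<in> D" and aD: "antisym_at (?F - Inf (dualI M N D)) D" using D unfolding Nset_char by auto
    have "odd (?F - Inf (dualI M N D))" using antisym_odd[OF aD] .
    hence ev: "2 * ?t D = K0 - (?F - Inf (dualI M N D))" using assms odd_div2 by blast
    have clD: "\<And>d g. d \<in> D \<Longrightarrow> g \<in> GI M N \<Longrightarrow> d + g \<in> D" using sD unfolding semI_def by blast
    have "\<forall>x\<in>E. x + M \<in> E" unfolding E fm
    proof (intro ballI)
      fix x assume "x \<in> (\<lambda>x. x + ?t D) ` D"
      hence "x - ?t D \<in> D" using shift_mem by metis
      hence "(x - ?t D) + M \<in> D" using clD M_GI by blast
      hence "(x + M) - ?t D \<in> D" by (simp add: algebra_simps)
      thus "x + M \<in> (\<lambda>x. x + ?t D) ` D" using shift_mem by metis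
    qed
    moreover have "\<forall>x\<in>E. x + N \<in> E" unfolding E fm
    proof (intro ballI)
      fix x assume "x \<in> (\<lambda>x. x + ?t D) ` D"
      hence "x - ?t D \<in> D" using shift_mem by metis
      hence "(x - ?t D) + N \<in> D" using clD N_GI by blast
      hence "(x + N) - ?t D \<in> D" by (simp add: algebra_simps)
      thus "x + N \<in> (\<lambda>x. x + ?t D) ` D" using shift_mem by metis
    qed
    moreover have "antisym_at K0 E"
      unfolding antisym_at_def E fm shift_mem
    proof
      fix x
      have "x - ?t D \<in> D \<longleftrightarrow> (?F - Inf (dualI M N D)) - (x - ?t D) \<notin> D" using aD unfolding antisym_at_def by blast
      moreover have "(?F - Inf (dualI M N D)) - (x - ?t D) = K0 - x - ?t D" using ev by (simp add: algebra_simps)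
      ultimately show "x - ?t D \<in> D \<longleftrightarrow> K0 - x - ?t D \<notin> D" by simp
    qed
    ultimately show "E \<in> Aset M N K0" unfolding Aset_def by simp
  next
    fix E assume "E \<in> Aset M N K0"
    hence cM: "\<forall>x\<in>E. x + M \<in> E" and cN: "\<forall>x\<in>E. x + N \<in> E" and aE: "antisym_at K0 E" unfolding Aset_def by auto
    have cG: "\<And>x g. x \<in> E \<Longrightarrow> g \<in> GI M N \<Longrightarrow> x + g \<in> E" using GI_closed[OF cM cN] by blast
    have ne: "E \<noteq> {}" using aE unfolding antisym_at_def by auto
    have lb: "\<And>y. y \<in> E \<Longrightarrow> K0 - 2*y \<le> ?F"
    proof (rule ccontr)
      fix y assume y: "y \<in> E" "\<not> K0 - 2*y \<le> ?F"
      hence "K0 - 2*y \<in> GI M N" using GI_large[OF cop mpos npos] by simp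
      hence "y + (K0 - 2*y) \<in> E" using cG y by blast
      hence "K0 - y \<in> E" by (simp add: algebra_simps)
      thus False using y aE unfolding antisym_at_def by blast
    qed
    have bdd: "bdd_below E"
    proof (rule bdd_belowI)
      fix y assume "y \<in> E"
      hence "K0 - 2*y \<le> ?F" using lb by blast
      moreover have "-\<bar>K0 - ?F\<bar> \<le> K0 - ?F" "0 \<le> \<bar>K0 - ?F\<bar>" by simp_all
      ultimately show "-\<bar>K0 - ?F\<bar> \<le> y" by linarith
    qed
    define \<mu> where "\<mu> = Inf E"
    have muE: "\<mu> \<in> E" using int_Inf_in[OF ne bdd] unfolding \<mu>_def .
    have mule: "\<And>y. y \<in> E \<Longrightarrow> \<mu> \<le> y" unfolding \<mu>_def using bdd by (simp add: cInf_lower)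
    define D where "D = (\<lambda>x. x + (-\<mu>)) ` E"
    have memD: "\<And>x. x \<in> D \<longleftrightarrow> x + \<mu> \<in> E" unfolding D_def shift_mem by simp
    have sD: "semI M N D" unfolding semI_def
    proof (intro conjI ballI subsetI)
      fix x assume "x \<in> D" thus "x \<in> {0..}" using memD mule by force
    next
      fix d g assume "d \<in> D" "g \<in> GI M N"
      hence "d + \<mu> + g \<in> E" using cG memD by blast
      thus "d + g \<in> D" using memD by (simp add: algebra_simps)
    qed
    have zD: "0 \<in> D" using memD muE by simp
    have aD: "antisym_at (K0 - 2*\<mu>) D" unfolding antisym_at_def
    proof
      fix x
      have "x + \<mu> \<in> E \<longleftrightarrow> K0 - (x + \<mu>) \<notin> E" using aE unfolding antisym_at_def by blast
      thus "x \<in> D \<longleftrightarrow> K0 - 2 * \<mu> - x \<notin> D" using memD by (simp add: algebra_simps)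
    qed
    have Inf: "Inf (dualI M N D) = ?F - (K0 - 2*\<mu>)" using Inf_dual_antisym[OF cop mpos npos sD zD aD] .
    have DN: "D \<in> Nset M N" unfolding Nset_char using sD zD aD Inf by simp
    have "?t D = \<mu>" using Inf by simp
    hence "fmap M N K0 D = E" unfolding fm using memD by (auto simp: shift_mem)
    thus "E \<in> fmap M N K0 ` Nset M N" using DN by blast
  qed
qed

end


definition LL :: "nat \<Rightarrow> nat \<Rightarrow> nat list set" where
  "LL a r = {xs. length xs = a \<and> sorted xs \<and> (\<forall>x\<in>set xs. x \<le> r)}"

lemma LL_0: "LL 0 r = {[]}" unfolding LL_def by auto

lemma LL_r0: "LL a 0 = {replicate a 0}"
  unfolding LL_def by (auto simp: replicate_length_same intro!: replicate_eqI) 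

lemma LL_step: "LL (Suc a) (Suc r) = (Cons 0) ` LL a (Suc r) \<union> (map Suc) ` LL (Suc a) r"
proof (intro set_eqI iffI)
  fix xs assume "xs \<in> LL (Suc a) (Suc r)"
  then obtain y ys where xs: "xs = y # ys" and l: "length ys = a" and s: "sorted (y#ys)" and b: "\<forall>x\<in>set (y#ys). x \<le> Suc r"
    unfolding LL_def by (cases xs) auto
  show "xs \<in> (Cons 0) ` LL a (Suc r) \<union> (map Suc) ` LL (Suc a) r"
  proof (cases "y = 0")
    case True
    hence "ys \<in> LL a (Suc r)" using l s b unfolding LL_def by auto
    thus ?thesis using xs True by auto
  next
    case False
    have pos: "\<forall>x\<in>set xs. 0 < x" using s False xs by auto
    have "xs = map Suc (map (\<lambda>x. x - 1) xs)" using pos by (induction xs) auto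
    moreover have "sorted (map (\<lambda>x. x - 1) xs)"
      unfolding sorted_map by (rule sorted_wrt_mono_rel[of xs "(\<le>)"]) (use s xs in auto)
    moreover have "map (\<lambda>x. x - 1) xs \<in> LL (Suc a) r"
      unfolding LL_def using l b xs calculation(2) by auto
    ultimately show ?thesis by blast
  qed
next
  fix xs assume "xs \<in> (Cons 0) ` LL a (Suc r) \<union> (map Suc) ` LL (Suc a) r"
  thus "xs \<in> LL (Suc a) (Suc r)" unfolding LL_def by (auto simp: sorted_map)
qed

lemma LL_card: "finite (LL a r) \<and> card (LL a r) = (a + r) choose a"
proof (induction r arbitrary: a)
  case 0 thus ?case by (simp add: LL_r0)
next
  case (Suc r)
  note IHr = Suc.IH
  show ?case
  proof (induction a)
    case 0 thus ?case by (simp add: LL_0)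
  next
    case (Suc a)
    have d: "(Cons 0) ` LL a (Suc r) \<inter> (map Suc) ` LL (Suc a) r = {}" by auto
    have f1: "finite ((Cons 0) ` LL a (Suc r))" using Suc.IH by simp
    have f2: "finite ((map Suc) ` LL (Suc a) r)" using IHr[of "Suc a"] by simp
    have c1: "card ((Cons 0) ` LL a (Suc r)) = (a + Suc r) choose a"
      using Suc.IH by (simp add: card_image)
    have c2: "card ((map Suc) ` LL (Suc a) r) = (Suc a + r) choose (Suc a)"
      using IHr[of "Suc a"] by (simp add: card_image inj_on_def)
    have "card (LL (Suc a) (Suc r)) = ((a + Suc r) choose a) + ((Suc a + r) choose (Suc a))"
      unfolding LL_step using card_Un_disjoint[OF f1 f2 d] c1 c2 by simp
    also have "\<dots> = (Suc a + Suc r) choose (Suc a)" by simp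
    finally show ?case unfolding LL_step using f1 f2 by simp
  qed
qed


definition "B0 a r e xs w = (if 0 \<le> w \<and> w < int a then - int (xs ! nat w)
   else if w < 0 then e + int (xs ! nat (-1-w)) else - int r)"
definition "Bf M N a r xs i = B0 a r (N - 2*int r) xs ((i + int a) mod M - int a) - ((i + int a) div M) * N"
definition "Eset M N a r xs = {x. \<exists>i j. x = i*N + j*M \<and> Bf M N a r xs i \<le> j}"
definition "Psi M N a r E = map (\<lambda>k. card {j \<in> {- int r..-1}. int k * N + j*M \<in> E}) [0..<a]"
definition "K0 M N r = -N + (N - 2*int r - 1)*M"

context
  fixes M N :: int and a r :: nat
  assumes cop: "coprime M N" and mpos: "0 < M" and npos: "0 < N"
    and ha: "M = 2*int a \<or> M = 2*int a + 1" and hr: "N = 2*int r \<or> N = 2*int r + 1"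
begin

lemma Bwin:
  assumes "- int a \<le> w" "w < M - int a"
  shows "Bf M N a r xs (w + t*M) = B0 a r (N - 2*int r) xs w - t*N"
proof -
  have eq: "(w + t*M + int a) = (w + int a) + t*M" by simp
  have b: "0 \<le> w + int a" "w + int a < M" using assms by auto
  have "(w + t*M + int a) mod M = w + int a" unfolding eq mod_mult_self1 using b by (simp add: mod_pos_pos_trivial)
  moreover have "(w + t*M + int a) div M = t" unfolding eq using b mpos by (simp add: div_pos_pos_trivial)
  ultimately show ?thesis unfolding Bf_def by simp
qed

lemma decomp: "\<exists>w t. - int a \<le> w \<and> w < M - int a \<and> i = w + t*M"
proof -
  define w where "w = (i + int a) mod M - int a"
  define t where "t = (i + int a) div M"
  have "i = w + t*M" unfolding w_def t_def by (metis add_diff_cancel diff_add_eq mod_div_mult_eq)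
  moreover have "- int a \<le> w" "w < M - int a" unfolding w_def using mpos by auto
  ultimately show ?thesis by blast
qed

lemma Bper: "Bf M N a r xs (i + s*M) = Bf M N a r xs i - s*N"
proof -
  obtain w t where w: "- int a \<le> w" "w < M - int a" "i = w + t*M" using decomp by blast
  have "i + s*M = w + (t+s)*M" using w by (simp add: algebra_simps)
  hence "Bf M N a r xs (i + s*M) = Bf M N a r xs (w + (t+s)*M)" by (rule arg_cong)
  also have "\<dots> = B0 a r (N - 2*int r) xs w - (t+s)*N" by (rule Bwin[OF w(1,2)])
  also have "\<dots> = (B0 a r (N - 2*int r) xs w - t*N) - s*N" by (simp add: algebra_simps)
  also have "B0 a r (N - 2*int r) xs w - t*N = Bf M N a r xs i" using Bwin[OF w(1,2)] w(3) by simp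
  finally show ?thesis .
qed

context
  fixes xs assumes xsL: "xs \<in> LL a r"
begin

lemma xs_facts: "length xs = a" "\<And>i j. i \<le> j \<Longrightarrow> j < a \<Longrightarrow> xs ! i \<le> xs ! j" "\<And>i. i < a \<Longrightarrow> xs ! i \<le> r"
  using xsL unfolding LL_def by (auto simp: sorted_iff_nth_mono)

lemma B0mono:
  assumes "- int a \<le> w" "w + 1 < M - int a"
  shows "B0 a r (N - 2*int r) xs (w+1) \<le> B0 a r (N - 2*int r) xs w"
proof -
  have e0: "0 \<le> N - 2*int r" using hr by auto
  consider "w + 1 < 0" | "w = -1" | "0 \<le> w" "w + 1 < int a" | "0 \<le> w" "w + 1 \<ge> int a" by linarith
  thus ?thesis
  proof cases
    case 1
    have "xs ! nat (-1-(w+1)) \<le> xs ! nat (-1-w)" using 1 assms by (intro xs_facts(2)) auto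
    thus ?thesis using 1 unfolding B0_def by auto
  next
    case 2
    hence "0 < a" using assms by auto
    thus ?thesis using 2 e0 unfolding B0_def by auto
  next
    case 3
    have "xs ! nat w \<le> xs ! nat (w+1)" using 3 by (intro xs_facts(2)) auto
    thus ?thesis using 3 unfolding B0_def by (auto simp: nat_add_distrib)
  next
    case 4
    hence wa: "w + 1 = int a" using assms ha by auto
    hence "xs ! nat w \<le> r" using 4 by (intro xs_facts(3)) auto
    thus ?thesis using 4 wa unfolding B0_def by auto
  qed
qed

lemma Bmono: "Bf M N a r xs (i+1) \<le> Bf M N a r xs i"
proof -
  obtain w t where w: "- int a \<le> w" "w < M - int a" "i = w + t*M" using decomp by blast
  show ?thesis
  proof (cases "w + 1 < M - int a")
    case True
    have "i + 1 = (w+1) + t*M" using w by simp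
    hence "Bf M N a r xs (i+1) = Bf M N a r xs ((w+1) + t*M)" by (rule arg_cong)
    also have "\<dots> = B0 a r (N - 2*int r) xs (w+1) - t*N" using True w by (intro Bwin) auto
    finally have "Bf M N a r xs (i+1) = B0 a r (N - 2*int r) xs (w+1) - t*N" .
    moreover have "Bf M N a r xs i = B0 a r (N - 2*int r) xs w - t*N" using Bwin w by simp
    ultimately show ?thesis using B0mono[OF w(1) True] by simp
  next
    case False
    hence wl: "w + 1 = M - int a" using w by simp
    have "i + 1 = (- int a) + (t+1)*M" using w wl by (simp add: algebra_simps)
    hence "Bf M N a r xs (i+1) = Bf M N a r xs ((- int a) + (t+1)*M)" by (rule arg_cong)
    also have "\<dots> = B0 a r (N - 2*int r) xs (- int a) - (t+1)*N" using mpos by (intro Bwin) auto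
    finally have "Bf M N a r xs (i+1) = B0 a r (N - 2*int r) xs (- int a) - (t+1)*N" .
    moreover have "Bf M N a r xs i = B0 a r (N - 2*int r) xs w - t*N" using Bwin w by simp
    moreover have "B0 a r (N - 2*int r) xs (- int a) - N \<le> B0 a r (N - 2*int r) xs w"
    proof (cases "a = 0")
      case True
      hence "M = 1" using ha mpos by auto
      hence "w = 0" using wl True by simp
      thus ?thesis using True npos unfolding B0_def by simp
    next
      case False
      have x: "xs ! (a-1) \<le> r" using False by (intro xs_facts(3)) auto
      have b1: "B0 a r (N - 2*int r) xs (- int a) = (N - 2*int r) + int (xs ! (a-1))"
        using False unfolding B0_def by (simp add: nat_diff_distrib)
      show ?thesis
      proof (cases "M = 2*int a")
        case True
        hence "w = int a - 1" using wl by simp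
        hence "B0 a r (N - 2*int r) xs w = - int (xs ! (a-1))" using False unfolding B0_def by (simp add: nat_diff_distrib)
        thus ?thesis using b1 x by simp
      next
        case False
        hence "M = 2*int a + 1" using ha by simp
        hence "w = int a" using wl by simp
        hence "B0 a r (N - 2*int r) xs w = - int r" unfolding B0_def by simp
        thus ?thesis using b1 x by simp
      qed
    qed
    ultimately show ?thesis by (simp add: algebra_simps)
  qed
qed

lemma Bsym: "Bf M N a r xs i + Bf M N a r xs (-1-i) = N - 2*int r"
proof -
  obtain w t where w: "- int a \<le> w" "w < M - int a" "i = w + t*M" using decomp by blast
  have bi: "Bf M N a r xs i = B0 a r (N - 2*int r) xs w - t*N" using Bwin w by simp
  consider "w < 0" | "0 \<le> w" "w < int a" | "int a \<le> w" by linarith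
  thus ?thesis
  proof cases
    case 1
    have h: "-1-i = (-1-w) + (-t)*M" using w by simp
    have win: "- int a \<le> -1-w" "-1-w < M - int a" using 1 w ha by auto
    have "Bf M N a r xs (-1-i) = Bf M N a r xs ((-1-w) + (-t)*M)" by (rule arg_cong[OF h])
    also have "\<dots> = B0 a r (N - 2*int r) xs (-1-w) - (-t)*N" by (rule Bwin[OF win])
    finally have "Bf M N a r xs (-1-i) = B0 a r (N - 2*int r) xs (-1-w) + t*N" by simp
    thus ?thesis using bi 1 w unfolding B0_def by auto
  next
    case 2
    have h: "-1-i = (-1-w) + (-t)*M" using w by simp
    have win: "- int a \<le> -1-w" "-1-w < M - int a" using 2 w ha by auto
    have "Bf M N a r xs (-1-i) = Bf M N a r xs ((-1-w) + (-t)*M)" by (rule arg_cong[OF h])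
    also have "\<dots> = B0 a r (N - 2*int r) xs (-1-w) - (-t)*N" by (rule Bwin[OF win])
    finally have "Bf M N a r xs (-1-i) = B0 a r (N - 2*int r) xs (-1-w) + t*N" by simp
    thus ?thesis using bi 2 w unfolding B0_def by auto
  next
    case 3
    hence wa: "w = int a" "M = 2*int a + 1" using w ha by auto
    have "-1-i = int a + (-t-1)*M" using w wa by (simp add: algebra_simps)
    hence "Bf M N a r xs (-1-i) = Bf M N a r xs (int a + (-t-1)*M)" by (rule arg_cong)
    also have "\<dots> = B0 a r (N - 2*int r) xs (int a) - (-t-1)*N" using wa by (intro Bwin) auto
    finally have "Bf M N a r xs (-1-i) = B0 a r (N - 2*int r) xs (int a) + (t+1)*N" by (simp add: algebra_simps)
    thus ?thesis using bi wa unfolding B0_def by (simp add: algebra_simps)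
  qed
qed


lemma Eset_mem: "i*N + j*M \<in> Eset M N a r xs \<longleftrightarrow> Bf M N a r xs i \<le> j"
proof
  assume "i*N + j*M \<in> Eset M N a r xs"
  then obtain i' j' where h: "i*N + j*M = i'*N + j'*M" "Bf M N a r xs i' \<le> j'" unfolding Eset_def by auto
  obtain s where s: "i = i' + s*M" "j = j' - s*N" using rep_unique[OF cop mpos h(1)[symmetric]] by blast
  have "Bf M N a r xs i = Bf M N a r xs i' - s*N" unfolding s(1) by (rule Bper)
  thus "Bf M N a r xs i \<le> j" using h(2) s(2) by simp
next
  assume "Bf M N a r xs i \<le> j" thus "i*N + j*M \<in> Eset M N a r xs" unfolding Eset_def by blast
qed

lemma Eset_A: "Eset M N a r xs \<in> Aset M N (K0 M N r)"
  unfolding Aset_def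
proof (intro CollectI conjI ballI)
  fix x assume "x \<in> Eset M N a r xs"
  then obtain i j where ij: "x = i*N + j*M" "Bf M N a r xs i \<le> j" unfolding Eset_def by auto
  have eqM: "x + M = i*N + (j+1)*M" using ij by (simp add: algebra_simps)
  have "i*N + (j+1)*M \<in> Eset M N a r xs" by (simp only: Eset_mem) (use ij(2) in simp)
  thus "x + M \<in> Eset M N a r xs" unfolding eqM .
  have eqN: "x + N = (i+1)*N + j*M" using ij by (simp add: algebra_simps)
  have "Bf M N a r xs (i+1) \<le> j" using Bmono[of i] ij by simp
  hence "(i+1)*N + j*M \<in> Eset M N a r xs" by (simp only: Eset_mem)
  thus "x + N \<in> Eset M N a r xs" unfolding eqN .
next
  show "antisym_at (K0 M N r) (Eset M N a r xs)" unfolding antisym_at_def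
  proof
    fix x
    obtain i j where ij: "x = i*N + j*M" using rep_exists[OF cop] by blast
    have "K0 M N r - x = (-1-i)*N + ((N - 2*int r) - 1 - j)*M" unfolding K0_def ij by (simp add: algebra_simps)
    hence "K0 M N r - x \<in> Eset M N a r xs \<longleftrightarrow> Bf M N a r xs (-1-i) \<le> (N - 2*int r) - 1 - j" using Eset_mem by simp
    moreover have "Bf M N a r xs i + Bf M N a r xs (-1-i) = N - 2*int r" by (rule Bsym)
    ultimately show "x \<in> Eset M N a r xs \<longleftrightarrow> K0 M N r - x \<notin> Eset M N a r xs" using ij Eset_mem by auto
  qed
qed

lemma Psi_Eset: "Psi M N a r (Eset M N a r xs) = xs"
proof (rule nth_equalityI)
  show "length (Psi M N a r (Eset M N a r xs)) = length xs" unfolding Psi_def using xs_facts(1) by simp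
  fix k assume "k < length (Psi M N a r (Eset M N a r xs))"
  hence k: "k < a" unfolding Psi_def by simp
  have "Bf M N a r xs (int k) = B0 a r (N - 2*int r) xs (int k)" using Bwin[of "int k" xs 0] k ha by auto
  hence bk: "Bf M N a r xs (int k) = - int (xs ! k)" using k unfolding B0_def by simp
  have "{j \<in> {- int r..-1}. int k * N + j*M \<in> Eset M N a r xs} = {- int (xs ! k)..-1}"
    using bk Eset_mem xs_facts(3)[OF k] by auto
  thus "Psi M N a r (Eset M N a r xs) ! k = xs ! k" unfolding Psi_def using k by simp
qed

end
end


lemma up_gen_int:
  fixes Q :: "int \<Rightarrow> bool"
  assumes up: "\<And>j. Q j \<Longrightarrow> Q (j+1)" and "Q j" "j \<le> j'"
  shows "Q j'"
proof -
  have "\<And>k::nat. Q (j + int k)"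
  proof -
    fix k :: nat show "Q (j + int k)"
    proof (induction k)
      case 0 show ?case using assms(2) by simp
    next
      case (Suc k)
      have e: "j + int (Suc k) = (j + int k) + 1" by simp
      show ?case unfolding e by (rule up[OF Suc.IH])
    qed
  qed
  from this[of "nat (j' - j)"] show ?thesis using assms(3) by simp
qed

lemma col_lemma:
  fixes Q :: "int \<Rightarrow> bool" and r :: nat
  assumes up: "\<And>j. Q j \<Longrightarrow> Q (j+1)" and q0: "Q 0" and qr: "\<not> Q (- int r - 1)"
  shows "Q j \<longleftrightarrow> - int (card {j \<in> {- int r..-1}. Q j}) \<le> j"
proof -
  define S where "S = {j \<in> {- int r - 1..0}. Q j}"
  have fS: "finite S" unfolding S_def by (rule finite_subset[of _ "{- int r - 1..0}"]) auto
  have nS: "S \<noteq> {}" unfolding S_def using q0 by auto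
  define t where "t = Min S"
  have tS: "t \<in> S" unfolding t_def using Min_in[OF fS nS] .
  have Qt: "Q t" and t0: "t \<le> 0" and tr1: "- int r - 1 \<le> t" using tS unfolding S_def by auto
  have "t \<noteq> - int r - 1" using Qt qr by auto
  hence tr: "- int r \<le> t" using tr1 by simp
  have char: "Q j' \<longleftrightarrow> t \<le> j'" for j'
  proof
    assume Qj: "Q j'"
    show "t \<le> j'"
    proof (rule ccontr)
      assume "\<not> t \<le> j'"
      hence jt: "j' < t" by simp
      show False
      proof (cases "- int r - 1 \<le> j'")
        case True
        hence "j' \<in> S" unfolding S_def using Qj jt t0 by auto
        hence "t \<le> j'" unfolding t_def using fS by simp
        thus False using jt by simp
      next
        case False
        hence jr: "j' \<le> - int r - 1" by simp
        have "Q (- int r - 1)" using up Qj jr by (rule up_gen_int)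
        thus False using qr by simp
      qed
    qed
  next
    assume tj: "t \<le> j'" show "Q j'" using up Qt tj by (rule up_gen_int)
  qed
  have "{j \<in> {- int r..-1}. Q j} = {t..-1}"
  proof (intro set_eqI)
    fix x show "x \<in> {j \<in> {- int r..-1}. Q j} \<longleftrightarrow> x \<in> {t..-1}" using char[of x] tr by auto
  qed
  hence "int (card {j \<in> {- int r..-1}. Q j}) = - t" using t0 by simp
  thus ?thesis using char by simp
qed

context
  fixes M N :: int and a r :: nat
  assumes cop: "coprime M N" and mpos: "0 < M" and npos: "0 < N"
    and ha: "M = 2*int a \<or> M = 2*int a + 1" and hr: "N = 2*int r \<or> N = 2*int r + 1"
begin

context
  fixes E assumes EA: "E \<in> Aset M N (K0 M N r)"
begin

lemma upE: "i*N + j*M \<in> E \<Longrightarrow> i*N + (j+1)*M \<in> E"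
proof -
  assume "i*N + j*M \<in> E"
  hence "(i*N + j*M) + M \<in> E" using EA unfolding Aset_def by blast
  moreover have "(i*N + j*M) + M = i*N + (j+1)*M" by (simp add: algebra_simps)
  ultimately show ?thesis by simp
qed

lemma rightE: "i*N + j*M \<in> E \<Longrightarrow> (i+1)*N + j*M \<in> E"
proof -
  assume "i*N + j*M \<in> E"
  hence "(i*N + j*M) + N \<in> E" using EA unfolding Aset_def by blast
  moreover have "(i*N + j*M) + N = (i+1)*N + j*M" by (simp add: algebra_simps)
  ultimately show ?thesis by simp
qed

lemma upE_gen: assumes "i*N + j*M \<in> E" "j \<le> j'" shows "i*N + j'*M \<in> E"
  using upE assms by (rule up_gen_int[of "\<lambda>j. i*N + j*M \<in> E"])

lemma rightE_gen: assumes "i*N + j*M \<in> E" "i \<le> i'" shows "i'*N + j*M \<in> E"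
  using rightE assms by (rule up_gen_int[of "\<lambda>i. i*N + j*M \<in> E"])

lemma perE: "(i + t*M)*N + j*M \<in> E \<longleftrightarrow> i*N + (j + t*N)*M \<in> E"
proof -
  have "(i + t*M)*N + j*M = i*N + (j + t*N)*M" by (simp add: algebra_simps)
  thus ?thesis by simp
qed

lemma antiE: "i*N + j*M \<in> E \<longleftrightarrow> (-1-i)*N + ((N - 2*int r) - 1 - j)*M \<notin> E"
proof -
  have "K0 M N r - (i*N + j*M) = (-1-i)*N + ((N - 2*int r) - 1 - j)*M" unfolding K0_def by (simp add: algebra_simps)
  moreover have "i*N + j*M \<in> E \<longleftrightarrow> K0 M N r - (i*N + j*M) \<notin> E" using EA unfolding Aset_def antisym_at_def by blast
  ultimately show ?thesis by simp
qed

lemma col0: assumes "0 \<le> i" "i < int a" shows "i*N + 0*M \<in> E"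
proof (rule ccontr)
  assume "i*N + 0*M \<notin> E"
  hence h1: "(-1-i)*N + ((N - 2*int r) - 1 - 0)*M \<in> E" using antiE by blast
  have h2: "i*N + ((N - 2*int r) - 1 - 0)*M \<in> E" by (rule rightE_gen[OF h1]) (use assms in auto)
  have "i*N + 0*M \<in> E" by (rule upE_gen[OF h2]) (use hr in auto)
  thus False using \<open>i*N + 0*M \<notin> E\<close> by simp
qed

lemma colr: assumes "0 \<le> i" "i < int a" shows "i*N + (- int r - 1)*M \<notin> E"
proof
  assume h: "i*N + (- int r - 1)*M \<in> E"
  have "(M - 1 - i)*N + (- int r - 1)*M \<in> E" by (rule rightE_gen[OF h]) (use assms ha in auto)
  hence "(-1-(M-1-i))*N + ((N - 2*int r) - 1 - (- int r - 1))*M \<notin> E" using antiE by blast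
  moreover have "(-1-(M-1-i)) = i + (-1)*M" by simp
  ultimately have "(i + (-1)*M)*N + ((N - 2*int r) - 1 - (- int r - 1))*M \<notin> E" by simp
  hence "i*N + ((N - 2*int r) - 1 - (- int r - 1) + (-1)*N)*M \<notin> E" using perE by blast
  hence "i*N + (- int r)*M \<notin> E" by (simp add: algebra_simps)
  moreover have "i*N + (- int r)*M \<in> E" by (rule upE_gen[OF h]) simp
  ultimately show False by simp
qed

lemma col_char: assumes "0 \<le> i" "i < int a"
  shows "i*N + j*M \<in> E \<longleftrightarrow> - int (card {j \<in> {- int r..-1}. i*N + j*M \<in> E}) \<le> j"
  by (rule col_lemma[of "\<lambda>j. i*N + j*M \<in> E"]) (use upE col0[OF assms] colr[OF assms] in auto)

lemma Psi_nth: "k < a \<Longrightarrow> Psi M N a r E ! k = card {j \<in> {- int r..-1}. int k*N + j*M \<in> E}"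
  unfolding Psi_def by simp

lemma Psi_LL: "Psi M N a r E \<in> LL a r"
  unfolding LL_def
proof (intro CollectI conjI ballI)
  show "length (Psi M N a r E) = a" unfolding Psi_def by simp
  show "sorted (Psi M N a r E)" unfolding sorted_iff_nth_mono
  proof (intro allI impI)
    fix i j assume ij: "i \<le> j" "j < length (Psi M N a r E)"
    hence ja: "j < a" unfolding Psi_def by simp
    have sub: "{jj \<in> {- int r..-1}. int i*N + jj*M \<in> E} \<subseteq> {jj \<in> {- int r..-1}. int j*N + jj*M \<in> E}"
    proof
      fix jj assume "jj \<in> {jj \<in> {- int r..-1}. int i*N + jj*M \<in> E}"
      hence "jj \<in> {- int r..-1}" "int i*N + jj*M \<in> E" by auto
      moreover have "int j*N + jj*M \<in> E" by (rule rightE_gen[OF calculation(2)]) (use ij in simp)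
      ultimately show "jj \<in> {jj \<in> {- int r..-1}. int j*N + jj*M \<in> E}" by simp
    qed
    have fin: "finite {jj \<in> {- int r..-1}. int j*N + jj*M \<in> E}"
      by (rule finite_subset[of _ "{- int r..-1}"]) auto
    have "card {jj \<in> {- int r..-1}. int i*N + jj*M \<in> E} \<le> card {jj \<in> {- int r..-1}. int j*N + jj*M \<in> E}"
      by (rule card_mono[OF fin sub])
    moreover have "i < a" using ij ja by simp
    ultimately show "Psi M N a r E ! i \<le> Psi M N a r E ! j" using Psi_nth ja by simp
  qed
  fix x assume "x \<in> set (Psi M N a r E)"
  then obtain k where k: "k < a" "x = Psi M N a r E ! k" unfolding Psi_def by auto
  have "card {j \<in> {- int r..-1}. int k*N + j*M \<in> E} \<le> card {- int r..-1}" by (rule card_mono) auto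
  thus "x \<le> r" using k Psi_nth by simp
qed

lemma win_char:
  assumes "- int a \<le> w" "w < M - int a"
  shows "w*N + j*M \<in> E \<longleftrightarrow> B0 a r (N - 2*int r) (Psi M N a r E) w \<le> j"
proof -
  consider "0 \<le> w" "w < int a" | "w < 0" | "int a \<le> w" by linarith
  thus ?thesis
  proof cases
    case 1
    have "B0 a r (N - 2*int r) (Psi M N a r E) w = - int (card {j \<in> {- int r..-1}. w*N + j*M \<in> E})"
      using 1 Psi_nth[of "nat w"] unfolding B0_def by simp
    moreover have "w*N + j*M \<in> E \<longleftrightarrow> - int (card {j \<in> {- int r..-1}. w*N + j*M \<in> E}) \<le> j"
      by (rule col_char[OF 1])
    ultimately show ?thesis by simp
  next
    case 2
    have w': "0 \<le> -1-w" "-1-w < int a" using 2 assms by auto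
    have "B0 a r (N - 2*int r) (Psi M N a r E) w = (N - 2*int r) + int (card {j \<in> {- int r..-1}. (-1-w)*N + j*M \<in> E})"
      using 2 w' Psi_nth[of "nat (-1-w)"] unfolding B0_def by simp
    moreover have "w*N + j*M \<in> E \<longleftrightarrow> (-1-w)*N + ((N - 2*int r) - 1 - j)*M \<notin> E" by (rule antiE)
    moreover have "(-1-w)*N + ((N - 2*int r) - 1 - j)*M \<in> E \<longleftrightarrow> - int (card {j \<in> {- int r..-1}. (-1-w)*N + j*M \<in> E}) \<le> (N - 2*int r) - 1 - j"
      by (rule col_char[OF w'])
    ultimately show ?thesis by auto
  next
    case 3
    hence wa: "w = int a" "M = 2*int a + 1" using assms ha by auto
    have B: "B0 a r (N - 2*int r) (Psi M N a r E) w = - int r" using wa unfolding B0_def by simp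
    have sym: "w*N + jj*M \<in> E \<longleftrightarrow> w*N + (- 2*int r - 1 - jj)*M \<notin> E" for jj
    proof -
      have eq: "(-1-w)*N + ((N - 2*int r) - 1 - jj)*M = w*N + (- 2*int r - 1 - jj)*M"
        using wa by (simp add: algebra_simps)
      show ?thesis using antiE[of w jj] unfolding eq .
    qed
    show ?thesis unfolding B
    proof
      assume h: "w*N + j*M \<in> E"
      show "- int r \<le> j"
      proof (rule ccontr)
        assume "\<not> - int r \<le> j"
        hence "w*N + (- 2*int r - 1 - j)*M \<in> E" by (intro upE_gen[OF h]) simp
        thus False using sym[of j] h by simp
      qed
    next
      assume h: "- int r \<le> j"
      show "w*N + j*M \<in> E"
      proof (rule ccontr)
        assume "w*N + j*M \<notin> E"
        hence "w*N + (- 2*int r - 1 - j)*M \<in> E" using sym[of j] by simp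
        hence "w*N + j*M \<in> E" by (rule upE_gen) (use h in auto)
        thus False using \<open>w*N + j*M \<notin> E\<close> by simp
      qed
    qed
  qed
qed

lemma Eset_Psi: "Eset M N a r (Psi M N a r E) = E"
proof (intro set_eqI)
  fix x
  obtain i j where ij: "x = i*N + j*M" using rep_exists[OF cop] by blast
  obtain w t where w: "- int a \<le> w" "w < M - int a" "i = w + t*M" using decomp[OF cop mpos npos ha hr] by blast
  have "x \<in> Eset M N a r (Psi M N a r E) \<longleftrightarrow> Bf M N a r (Psi M N a r E) i \<le> j"
    unfolding ij by (rule Eset_mem[OF cop mpos npos ha hr Psi_LL])
  also have "Bf M N a r (Psi M N a r E) i = B0 a r (N - 2*int r) (Psi M N a r E) w - t*N"
    unfolding w(3) by (rule Bwin[OF cop mpos npos ha hr w(1,2)])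
  also have "(B0 a r (N - 2*int r) (Psi M N a r E) w - t*N \<le> j) \<longleftrightarrow> w*N + (j + t*N)*M \<in> E"
    using win_char[OF w(1,2), of "j + t*N"] by linarith
  also have "\<dots> \<longleftrightarrow> x \<in> E" unfolding ij w(3) using perE by blast
  finally show "x \<in> Eset M N a r (Psi M N a r E) \<longleftrightarrow> x \<in> E" .
qed

end

lemma Psi_bij: "bij_betw (Psi M N a r) (Aset M N (K0 M N r)) (LL a r)"
  unfolding bij_betw_def
proof
  show "inj_on (Psi M N a r) (Aset M N (K0 M N r))"
    by (rule inj_onI) (metis Eset_Psi)
  show "Psi M N a r ` Aset M N (K0 M N r) = LL a r"
  proof
    show "Psi M N a r ` Aset M N (K0 M N r) \<subseteq> LL a r" using Psi_LL by blast
    show "LL a r \<subseteq> Psi M N a r ` Aset M N (K0 M N r)"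
    proof
      fix xs assume xs: "xs \<in> LL a r"
      have "xs = Psi M N a r (Eset M N a r xs)" using Psi_Eset[OF cop mpos npos ha hr xs] by simp
      thus "xs \<in> Psi M N a r ` Aset M N (K0 M N r)" using Eset_A[OF cop mpos npos ha hr xs] by blast
    qed
  qed
qed

end


theorem mainTheorem12:
  fixes m n :: nat
  assumes "0 < m" "0 < n" "coprime m n"
  shows "card {D. is_semimodule m n D \<and> zero_normalized D \<and> hat m n D = D}
         = (m div 2 + n div 2) choose (m div 2)"
proof -
  let ?M = "int m" and ?N = "int n" and ?a = "m div 2" and ?r = "n div 2"
  have cop: "coprime ?M ?N" using assms(3) by simp
  have mpos: "0 < ?M" and npos: "0 < ?N" using assms by auto
  have ha: "?M = 2*int ?a \<or> ?M = 2*int ?a + 1" by presburger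
  have hr: "?N = 2*int ?r \<or> ?N = 2*int ?r + 1" by presburger
  have set_eq: "{D. is_semimodule m n D \<and> zero_normalized D \<and> hat m n D = D} = Nset ?M ?N"
    unfolding Nset_def sem_semI zero_normalized_def hat_def dual_dualI semI_def by auto
  have oddK: "odd (K0 ?M ?N ?r)"
  proof (cases "even n")
    case True
    have "odd m"
    proof
      assume "even m"
      hence "is_unit (2::nat)" using coprime_common_divisor[OF assms(3)] True by blast
      thus False by simp
    qed
    hence "?N - 2*int ?r = 0" "odd ?M" using True by auto
    thus ?thesis using True unfolding K0_def by simp
  next
    case False
    hence "?N - 2*int ?r = 1" by presburger
    thus ?thesis using False unfolding K0_def by simp
  qed
  have "card (Nset ?M ?N) = card (Aset ?M ?N (K0 ?M ?N ?r))"
    by (rule bij_betw_same_card[OF fmap_bij[OF cop mpos npos oddK]])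
  also have "\<dots> = card (LL ?a ?r)"
    by (rule bij_betw_same_card[OF Psi_bij[OF cop mpos npos ha hr]])
  also have "\<dots> = (?a + ?r) choose ?a" using LL_card by blast
  finally show ?thesis unfolding set_eq .
qed


end
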